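(* Let $H$ be a vertically connected matroid and $Y\subseteq E(H)$. Suppose that $\{A,B\}$ is a vertical $2$-separation of $H$ with $A$ minimal (under inclusion) among sides of vertical $2$-separations of $H$ that contain $Y$. Then $(A-Y)\cap \mathrm{cl}_H(B)=\emptyset$. Moreover, if $x\in (A-Y)\cap \mathrm{cl}^*_H(B)$, then $r_H(A)=2$ and $x$ is a coloop of $H|A$.
   Context: For a matroid $H$ and $A\subseteq E(H)$, $\lambda_H(A)=r_H(A)+r_H(E(H)-A)-r(H)$. A partition $\{A,B\}$ of $E(H)$ is a vertical $k$-separation if $\lambda_H(A)\le k-1$ and $r_H(A),r_H(B)\ge k$. $H$ is vertically connected if it has no vertical $1$-separation, and vertically $3$-connected if it has no vertical $1$- or $2$-separation. $\mathrm{cl}^*_H$ is the closure operator of the dual $H^*$. *)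

theory Defs
  imports Main
begin

text \<open>A (finite) matroid H is given by its ground set E and rank function r,
  satisfying the rank axioms (R1)-(R3). The rank function is only meaningful on
  subsets of E.\<close>
definition matroid :: "'a set \<Rightarrow> ('a set \<Rightarrow> nat) \<Rightarrow> bool" where
  "matroid E r \<longleftrightarrow> finite E
     \<and> (\<forall>X. X \<subseteq> E \<longrightarrow> r X \<le> card X)
     \<and> (\<forall>X Y. X \<subseteq> Y \<and> Y \<subseteq> E \<longrightarrow> r X \<le> r Y)
     \<and> (\<forall>X Y. X \<subseteq> E \<and> Y \<subseteq> E \<longrightarrow> r (X \<union> Y) + r (X \<inter> Y) \<le> r X + r Y)"

definition conn :: "'a set \<Rightarrow> ('a set \<Rightarrow> nat) \<Rightarrow> 'a set \<Rightarrow> int" where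
  "conn E r A = int (r A) + int (r (E - A)) - int (r E)"

definition vert_sep :: "'a set \<Rightarrow> ('a set \<Rightarrow> nat) \<Rightarrow> nat \<Rightarrow> 'a set \<Rightarrow> 'a set \<Rightarrow> bool" where
  "vert_sep E r k A B \<longleftrightarrow> A \<union> B = E \<and> A \<inter> B = {}
     \<and> conn E r A \<le> int k - 1 \<and> r A \<ge> k \<and> r B \<ge> k"

definition vert_connected :: "'a set \<Rightarrow> ('a set \<Rightarrow> nat) \<Rightarrow> bool" where
  "vert_connected E r \<longleftrightarrow> \<not> (\<exists>A B. vert_sep E r 1 A B)"

definition vert_3_connected :: "'a set \<Rightarrow> ('a set \<Rightarrow> nat) \<Rightarrow> bool" where
  "vert_3_connected E r \<longleftrightarrow> \<not> (\<exists>A B. vert_sep E r 1 A B \<or> vert_sep E r 2 A B)"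

definition cl :: "'a set \<Rightarrow> ('a set \<Rightarrow> nat) \<Rightarrow> 'a set \<Rightarrow> 'a set" where
  "cl E r X = {x \<in> E. r (X \<union> {x}) = r X}"

definition dual_rank :: "'a set \<Rightarrow> ('a set \<Rightarrow> nat) \<Rightarrow> 'a set \<Rightarrow> nat" where
  "dual_rank E r X = card X + r (E - X) - r E"

definition cl_dual :: "'a set \<Rightarrow> ('a set \<Rightarrow> nat) \<Rightarrow> 'a set \<Rightarrow> 'a set" where
  "cl_dual E r X = cl E (dual_rank E r) X"

text \<open>x is a coloop of the matroid (E, r): x lies in every basis,
  i.e. deleting x drops the rank. The restriction H|A is the matroid (A, r).\<close>
definition coloop :: "'a set \<Rightarrow> ('a set \<Rightarrow> nat) \<Rightarrow> 'a \<Rightarrow> bool" where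
  "coloop E r x \<longleftrightarrow> x \<in> E \<and> r (E - {x}) < r E"

end

theory Submission
  imports Defs
begin

theorem lemma3p2:
  fixes E :: "'a set" and r :: "'a set \<Rightarrow> nat" and Y A B :: "'a set"
  assumes "matroid E r"
    and "vert_connected E r"
    and "Y \<subseteq> E"
    and "vert_sep E r 2 A B"
    and "Y \<subseteq> A"
    and "\<And>A' B'. vert_sep E r 2 A' B' \<Longrightarrow> Y \<subseteq> A' \<Longrightarrow> A' \<subseteq> A \<Longrightarrow> A' = A"
  shows "(A - Y) \<inter> cl E r B = {}
    \<and> (\<forall>x \<in> (A - Y) \<inter> cl_dual E r B. r A = 2 \<and> coloop A r x)"
proof -
  have fin: "finite E" and card: "\<And>X. X \<subseteq> E \<Longrightarrow> r X \<le> card X"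
    and mono: "\<And>X Z. X \<subseteq> Z \<Longrightarrow> Z \<subseteq> E \<Longrightarrow> r X \<le> r Z"
    and sub: "\<And>X Z. X \<subseteq> E \<Longrightarrow> Z \<subseteq> E \<Longrightarrow> r (X \<union> Z) + r (X \<inter> Z) \<le> r X + r Z"
    using assms(1) unfolding matroid_def by blast+
  have un: "A \<union> B = E" and dis: "A \<inter> B = {}" and rA: "r A \<ge> 2" and rB: "r B \<ge> 2"
    using assms(4) unfolding vert_sep_def by auto
  have EB: "E - A = B" using un dis by blast
  have c: "int (r A) + int (r B) - int (r E) \<le> 1"
    using assms(4) EB unfolding vert_sep_def conn_def by simp
  have rE: "r E \<le> r A + r B" using sub[of A B] un by auto
  have plus1: "\<And>X x. X \<subseteq> E \<Longrightarrow> x \<in> E \<Longrightarrow> r (X \<union> {x}) \<le> r X + 1"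
  proof -
    fix X x assume "X \<subseteq> E" "x \<in> E"
    then have "r (X \<union> {x}) + r (X \<inter> {x}) \<le> r X + r {x}" using sub[of X "{x}"] by auto
    moreover have "r {x} \<le> 1" using card[of "{x}"] \<open>x \<in> E\<close> by auto
    ultimately show "r (X \<union> {x}) \<le> r X + 1" by linarith
  qed
  have key: "\<And>x. x \<in> A - Y \<Longrightarrow> int (r (A - {x})) + int (r (B \<union> {x})) - int (r E) \<le> 1
               \<Longrightarrow> r (A - {x}) \<le> 1"
  proof (rule ccontr)
    fix x assume x: "x \<in> A - Y" and cc: "int (r (A - {x})) + int (r (B \<union> {x})) - int (r E) \<le> 1"
      and n: "\<not> r (A - {x}) \<le> 1"
    have "r B \<le> r (B \<union> {x})" using mono[of B "B \<union> {x}"] un x by auto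
    have "vert_sep E r 2 (A - {x}) (B \<union> {x})"
    proof -
      have "E - (A - {x}) = B \<union> {x}" using un dis x by auto
      moreover have "(A - {x}) \<union> (B \<union> {x}) = E" "(A - {x}) \<inter> (B \<union> {x}) = {}" using un dis x by auto
      ultimately show ?thesis unfolding vert_sep_def conn_def
        using n rB \<open>r B \<le> r (B \<union> {x})\<close> cc by auto
    qed
    then show False using assms(6)[of "A - {x}" "B \<union> {x}"] assms(5) x by auto
  qed
  have xE: "\<And>x. x \<in> A \<Longrightarrow> x \<in> E" using un by auto
  have AxE: "A - {x} \<subseteq> E" for x using un by auto
  have BE: "B \<subseteq> E" using un by auto
  have part1: "(A - Y) \<inter> cl E r B = {}"
  proof (rule ccontr)
    assume "(A - Y) \<inter> cl E r B \<noteq> {}"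
    then obtain x where x: "x \<in> A - Y" and cl: "r (B \<union> {x}) = r B" unfolding cl_def by auto
    have "r A \<le> r (A - {x}) + 1" using plus1[OF AxE[of x], of x] x xE by (simp add: insert_absorb)
    moreover have "r (A - {x}) \<le> r A" using mono[of "A - {x}" A] un by auto
    ultimately have "int (r (A - {x})) + int (r (B \<union> {x})) - int (r E) \<le> 1" using cl c by linarith
    then have le1: "r (A - {x}) \<le> 1" using key x by blast
    hence "r A = 2" "r (A - {x}) = 1" using rA \<open>r A \<le> r (A - {x}) + 1\<close> by auto
    have "vert_sep E r 1 (A - {x}) (B \<union> {x})"
    proof -
      have "E - (A - {x}) = B \<union> {x}" using un dis x by auto
      moreover have "(A - {x}) \<union> (B \<union> {x}) = E" "(A - {x}) \<inter> (B \<union> {x}) = {}" using un dis x by auto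
      ultimately show ?thesis unfolding vert_sep_def conn_def
        using rB cl c \<open>r A = 2\<close> \<open>r (A - {x}) = 1\<close> by auto
    qed
    then show False using assms(2) unfolding vert_connected_def by blast
  qed
  have part2: "\<forall>x \<in> (A - Y) \<inter> cl_dual E r B. r A = 2 \<and> coloop A r x"
  proof
    fix x assume "x \<in> (A - Y) \<inter> cl_dual E r B"
    then have x: "x \<in> A - Y" and d: "dual_rank E r (B \<union> {x}) = dual_rank E r B"
      unfolding cl_dual_def cl_def by auto
    have xB: "x \<notin> B" using x dis by auto
    have cB: "card (B \<union> {x}) = card B + 1" using xB fin BE
      by (metis Suc_eq_plus1 Un_commute card_insert_disjoint finite_subset insert_is_Un)
    have e1: "E - (B \<union> {x}) = A - {x}" and e2: "E - B = A" using un dis by auto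
    have rEB: "r E \<le> card B + r A" using rE card[OF BE] by linarith
    have rEB2: "r E \<le> card (B \<union> {x}) + r (A - {x})"
    proof -
      have eq: "(B \<union> {x}) \<union> (A - {x}) = E" using un x by auto
      have "B \<union> {x} \<subseteq> E" using BE x xE by auto
      hence "r ((B \<union> {x}) \<union> (A - {x})) + r ((B \<union> {x}) \<inter> (A - {x})) \<le> r (B \<union> {x}) + r (A - {x})"
        using sub AxE by blast
      hence "r E \<le> r (B \<union> {x}) + r (A - {x})" unfolding eq by linarith
      moreover have "r (B \<union> {x}) \<le> card (B \<union> {x})" using card BE xE x by auto
      ultimately show ?thesis by linarith
    qed
    have "card B + 1 + r (A - {x}) = card B + r A" using d rEB rEB2 cB unfolding dual_rank_def e1 e2 by linarith
    hence drop: "r (A - {x}) + 1 = r A" by linarith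
    have "r (B \<union> {x}) \<le> r B + 1" using plus1[OF BE, of x] x xE by auto
    hence "int (r (A - {x})) + int (r (B \<union> {x})) - int (r E) \<le> 1" using drop c by linarith
    hence "r (A - {x}) \<le> 1" using key x by blast
    hence "r A = 2" using drop rA by linarith
    moreover have "coloop A r x" unfolding coloop_def using x drop by auto
    ultimately show "r A = 2 \<and> coloop A r x" by blast
  qed
  show ?thesis using part1 part2 by blast
qed

end
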